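(* For every positive integer $k$, there exist a finite simple undirected graph $G$ and an orientation $\vec{G}$ of $G$ such that $\operatorname{adim}(G)\geq\operatorname{bdim}(G)=2^k+k-1$ and $k\geq\operatorname{adim}(\vec{G})\geq\operatorname{bdim}(\vec{G})$.
   Context: An orientation of $G$ is a directed graph obtained by assigning a direction to each edge of $G$. In an undirected graph, $d(u,v)$ is the shortest-path distance; in a directed graph, $d(u,v)$ is the length of a shortest directed path from $u$ to $v$; in both cases $d(u,v)=\infty$ if no such path exists. For a nonnegative integer $k$, $d_k(u,v)=\min(d(u,v),k+1)$. A function $f:V\to\mathbb{Z}_{\geq 0}$ is a resolving broadcast if for any distinct vertices $x,y$ there is $z$ with $f(z)>0$ and $d_{f(z)}(z,x)\neq d_{f(z)}(z,y)$. The broadcast dimension $\operatorname{bdim}$ is the minimum of $\sum_v f(v)$ over resolving broadcasts $f$. A set $A$ of vertices is an adjacency resolving set if for any distinct $x,y$ there is $z\in A$ with $d_1(z,x)\neq d_1(z,y)$; the adjacency dimension $\operatorname{adim}$ is the minimum cardinality of such a set. *)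

theory Defs
  imports Main "HOL-Library.Extended_Nat"
begin

text \<open>An undirected graph is a symmetric irreflexive relation; then
directed distance in R coincides with the usual shortest-path distance.\<close>

definition simple_graph :: "nat set \<Rightarrow> (nat \<Rightarrow> nat \<Rightarrow> bool) \<Rightarrow> bool" where
  "simple_graph V E \<longleftrightarrow> finite V \<and> (\<forall>u v. E u v \<longrightarrow> u \<in> V \<and> v \<in> V)
     \<and> (\<forall>u. \<not> E u u) \<and> (\<forall>u v. E u v \<longrightarrow> E v u)"

definition orientation :: "(nat \<Rightarrow> nat \<Rightarrow> bool) \<Rightarrow> (nat \<Rightarrow> nat \<Rightarrow> bool) \<Rightarrow> bool" where
  "orientation E D \<longleftrightarrow> (\<forall>u v. D u v \<longrightarrow> E u v)
     \<and> (\<forall>u v. E u v \<longrightarrow> (D u v \<longleftrightarrow> \<not> D v u))"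

definition dist :: "(nat \<Rightarrow> nat \<Rightarrow> bool) \<Rightarrow> nat \<Rightarrow> nat \<Rightarrow> enat" where
  "dist R u v = Inf {enat n | n. (R ^^ n) u v}"

definition dist_trunc :: "(nat \<Rightarrow> nat \<Rightarrow> bool) \<Rightarrow> nat \<Rightarrow> nat \<Rightarrow> nat \<Rightarrow> enat" where
  "dist_trunc R k u v = min (dist R u v) (enat (k + 1))"

definition resolving_broadcast :: "nat set \<Rightarrow> (nat \<Rightarrow> nat \<Rightarrow> bool) \<Rightarrow> (nat \<Rightarrow> nat) \<Rightarrow> bool" where
  "resolving_broadcast V R f \<longleftrightarrow>
     (\<forall>x\<in>V. \<forall>y\<in>V. x \<noteq> y \<longrightarrow>
        (\<exists>z\<in>V. f z > 0 \<and> dist_trunc R (f z) z x \<noteq> dist_trunc R (f z) z y))"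

definition bdim :: "nat set \<Rightarrow> (nat \<Rightarrow> nat \<Rightarrow> bool) \<Rightarrow> nat" where
  "bdim V R = Inf {(\<Sum>v\<in>V. f v) | f. resolving_broadcast V R f}"

definition adjacency_resolving :: "nat set \<Rightarrow> (nat \<Rightarrow> nat \<Rightarrow> bool) \<Rightarrow> nat set \<Rightarrow> bool" where
  "adjacency_resolving V R A \<longleftrightarrow> A \<subseteq> V \<and>
     (\<forall>x\<in>V. \<forall>y\<in>V. x \<noteq> y \<longrightarrow> (\<exists>z\<in>A. dist_trunc R 1 z x \<noteq> dist_trunc R 1 z y))"

definition adim :: "nat set \<Rightarrow> (nat \<Rightarrow> nat \<Rightarrow> bool) \<Rightarrow> nat" where
  "adim V R = Inf {card A | A. adjacency_resolving V R A}"

end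

theory Submission
  imports Defs
begin

lemma dist_self: "dist R u u = 0"
proof -
  have "enat 0 \<in> {enat n | n. (R ^^ n) u u}" by auto
  then have "dist R u u \<le> enat 0" unfolding dist_def by (rule Inf_lower)
  then show ?thesis by (simp add: zero_enat_def[symmetric])
qed

lemma dist_ge1: assumes "u \<noteq> v" shows "dist R u v \<ge> 1"
  unfolding dist_def
proof (rule Inf_greatest)
  fix x assume "x \<in> {enat n | n. (R ^^ n) u v}"
  then obtain n where "x = enat n" "(R ^^ n) u v" by auto
  with assms have "n \<noteq> 0" by (cases n) auto
  then show "1 \<le> x" using \<open>x = enat n\<close> by (simp add: one_enat_def)
qed

lemma dist_one: assumes "u \<noteq> v" "R u v" shows "dist R u v = 1"
proof -
  have "enat 1 \<in> {enat n | n. (R ^^ n) u v}" using assms(2) by auto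
  then have "dist R u v \<le> enat 1" unfolding dist_def by (rule Inf_lower)
  with dist_ge1[OF assms(1), of R] show ?thesis unfolding one_enat_def[symmetric] by (rule order.antisym[rotated])
qed

lemma dist_ge2: assumes "u \<noteq> v" "\<not> R u v" shows "dist R u v \<ge> 2"
  unfolding dist_def
proof (rule Inf_greatest)
  fix x assume "x \<in> {enat n | n. (R ^^ n) u v}"
  then obtain n where "x = enat n" "(R ^^ n) u v" by auto
  have "n \<noteq> 0" using assms \<open>(R ^^ n) u v\<close> by (cases n) auto
  moreover have "n \<noteq> 1" using assms \<open>(R ^^ n) u v\<close> by auto
  ultimately show "2 \<le> x" using \<open>x = enat n\<close> by (simp add: numeral_eq_enat)
qed

lemma dt1: "dist_trunc R 1 u v = (if u = v then 0 else if R u v then 1 else 2)"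
proof -
  have e: "enat (1+1) = 2" by (simp add: numeral_eq_enat)
  show ?thesis
  proof (cases "u = v")
    case True then show ?thesis unfolding dist_trunc_def e by (simp add: dist_self)
  next
    case False
    show ?thesis
    proof (cases "R u v")
      case True then show ?thesis using False unfolding dist_trunc_def e by (simp add: dist_one)
    next
      case nR: False
      have "dist R u v \<ge> 2" using dist_ge2[of u v R, OF False nR] .
      then show ?thesis using False nR unfolding dist_trunc_def e by (simp add: min_def)
    qed
  qed
qed
lemma dt1s: "dist_trunc R (Suc 0) u v = (if u = v then 0 else if R u v then 1 else 2)"
  using dt1[of R u v] by simp

lemma adim_ge_bdim:
  assumes "finite V"
  shows "bdim V R \<le> adim V R"
proof -
  have "adjacency_resolving V R V"
    unfolding adjacency_resolving_def
  proof (intro conjI ballI impI)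
    fix x y assume "x \<in> V" "y \<in> V" "x \<noteq> y"
    then show "\<exists>z\<in>V. dist_trunc R 1 z x \<noteq> dist_trunc R 1 z y"
      by (intro bexI[of _ x]) (auto simp: dt1 dt1s)
  qed simp
  then have ne: "{card A | A. adjacency_resolving V R A} \<noteq> {}" by auto
  then have "adim V R \<in> {card A | A. adjacency_resolving V R A}"
    unfolding adim_def by (rule Inf_nat_def1)
  then obtain A where A: "adjacency_resolving V R A" "adim V R = card A" by auto
  define f where "f = (\<lambda>v. if v \<in> A then 1 else (0::nat))"
  have AV: "A \<subseteq> V" using A(1) unfolding adjacency_resolving_def by auto
  have "resolving_broadcast V R f"
    unfolding resolving_broadcast_def
  proof (intro ballI impI)
    fix x y assume "x \<in> V" "y \<in> V" "x \<noteq> y"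
    then obtain z where "z \<in> A" "dist_trunc R 1 z x \<noteq> dist_trunc R 1 z y"
      using A(1) unfolding adjacency_resolving_def by blast
    then show "\<exists>z\<in>V. f z > 0 \<and> dist_trunc R (f z) z x \<noteq> dist_trunc R (f z) z y"
      using AV by (intro bexI[of _ z]) (auto simp: f_def)
  qed
  moreover have "(\<Sum>v\<in>V. f v) = card A"
    unfolding f_def using AV assms
    by (simp add: sum.If_cases Int_absorb1)
  ultimately have "card A \<in> {(\<Sum>v\<in>V. f v) | f. resolving_broadcast V R f}" by force
  then have "bdim V R \<le> card A" unfolding bdim_def by (rule wellorder_Inf_le1)
  then show ?thesis using A(2) by simp
qed

lemma bits_differ:
  fixes m m' :: nat
  assumes "m < 2 ^ k" "m' < 2 ^ k" "m \<noteq> m'"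
  shows "\<exists>a<k. bit m a \<noteq> bit m' a"
proof (rule ccontr)
  assume "\<not> ?thesis"
  then have "\<forall>a. bit (take_bit k m) a = bit (take_bit k m') a"
    by (auto simp: bit_take_bit_iff)
  then have "take_bit k m = take_bit k m'" by (simp add: bit_eq_iff)
  with assms show False by (simp add: take_bit_nat_eq_self)
qed

theorem theorem5p4:
  fixes k :: nat
  assumes "k \<ge> 1"
  shows "\<exists>(V::nat set) E D. simple_graph V E \<and> orientation E D
    \<and> adim V E \<ge> bdim V E \<and> bdim V E = 2 ^ k + k - 1
    \<and> k \<ge> adim V D \<and> adim V D \<ge> bdim V D"
proof -
  define n where "n = 2 ^ k + k"
  define V where "V = {..<n}"
  define E where "E = (\<lambda>u v. u < n \<and> v < n \<and> u \<noteq> v)"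
  define D where "D = (\<lambda>u v. u < n \<and> v < n \<and> u \<noteq> v \<and>
     (if u < k \<and> k \<le> v then bit (v - k) u
      else if v < k \<and> k \<le> u then \<not> bit (u - k) v else u < v))"
  have fin: "finite V" unfolding V_def by simp
  have sg: "simple_graph V E" unfolding simple_graph_def V_def E_def by auto
  have ori: "orientation E D" unfolding orientation_def E_def D_def by auto
  have bE: "bdim V E = n - 1"
  proof -
    define f where "f = (\<lambda>v. if v < n - 1 then 1 else (0::nat))"
    have rf: "resolving_broadcast V E f"
      unfolding resolving_broadcast_def
    proof (intro ballI impI)
      fix x y assume xy: "x \<in> V" "y \<in> V" "x \<noteq> y"
      show "\<exists>z\<in>V. f z > 0 \<and> dist_trunc E (f z) z x \<noteq> dist_trunc E (f z) z y"
      proof (cases "x < n - 1")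
        case True
        then show ?thesis using xy
          by (intro bexI[of _ x]) (auto simp: f_def dt1 dt1s)
      next
        case False
        then have "y < n - 1" using xy unfolding V_def by auto
        then show ?thesis using xy
          by (intro bexI[of _ y]) (auto simp: f_def dt1 dt1s)
      qed
    qed
    have sf: "(\<Sum>v\<in>V. f v) = n - 1"
    proof -
      have "(\<Sum>v\<in>V. f v) = card (V \<inter> {v. v < n - 1})"
        unfolding f_def using fin by (simp add: sum.If_cases)
      also have "V \<inter> {v. v < n - 1} = {..<n-1}" unfolding V_def by auto
      finally show ?thesis by simp
    qed
    have "n - 1 \<in> {(\<Sum>v\<in>V. f v) | f. resolving_broadcast V E f}" using rf sf by force
    then have le: "bdim V E \<le> n - 1"
      unfolding bdim_def by (rule wellorder_Inf_le1)
    have ge: "n - 1 \<le> (\<Sum>v\<in>V. g v)" if rg: "resolving_broadcast V E g" for g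
    proof -
      define Z where "Z = {v \<in> V. g v = 0}"
      have finZ: "finite Z" using fin unfolding Z_def by simp
      have "\<forall>a1\<in>Z. \<forall>a2\<in>Z. a1 = a2"
      proof (intro ballI, rule ccontr)
        fix x y assume "x \<in> Z" "y \<in> Z" "x \<noteq> y"
        then obtain z where z: "z \<in> V" "g z > 0"
          "dist_trunc E (g z) z x \<noteq> dist_trunc E (g z) z y"
          using rg unfolding resolving_broadcast_def Z_def by blast
        have "z \<noteq> x" "z \<noteq> y" using z(2) \<open>x \<in> Z\<close> \<open>y \<in> Z\<close> unfolding Z_def by auto
        then have "dist E z x = 1" "dist E z y = 1"
          using \<open>x \<in> Z\<close> \<open>y \<in> Z\<close> z(1) unfolding Z_def V_def
          by (auto intro!: dist_one simp: E_def)
        then show False using z(3) unfolding dist_trunc_def by (simp del: One_nat_def)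
      qed
      then have cZ: "card Z \<le> 1" using finZ card_le_Suc0_iff_eq by auto
      have "card (V - Z) = card V - card Z" using finZ
        by (simp add: Z_def card_Diff_subset)
      then have c: "n - 1 \<le> card (V - Z)" using cZ unfolding V_def by simp
      have "card (V - Z) = (\<Sum>v\<in>V - Z. 1::nat)" by simp
      also have "\<dots> \<le> (\<Sum>v\<in>V - Z. g v)"
        by (rule sum_mono) (auto simp: Z_def)
      also have "\<dots> \<le> (\<Sum>v\<in>V. g v)"
        using fin by (intro sum_mono2) auto
      finally show ?thesis using c by simp
    qed
    have "bdim V E \<in> {(\<Sum>v\<in>V. f v) | f. resolving_broadcast V E f}"
      unfolding bdim_def using rf by (intro Inf_nat_def1) auto
    then have "n - 1 \<le> bdim V E" using ge by auto
    with le show ?thesis by simp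
  qed
  have aD: "adim V D \<le> k"
  proof -
    define A where "A = {..<k}"
    have "adjacency_resolving V D A"
      unfolding adjacency_resolving_def
    proof (intro conjI ballI impI)
      show "A \<subseteq> V" unfolding A_def V_def n_def by auto
    next
      fix x y assume xy: "x \<in> V" "y \<in> V" "x \<noteq> y"
      show "\<exists>z\<in>A. dist_trunc D 1 z x \<noteq> dist_trunc D 1 z y"
      proof (cases "x < k")
        case True
        then show ?thesis using xy by (intro bexI[of _ x]) (auto simp: dt1 dt1s A_def)
      next
        case xk: False
        show ?thesis
        proof (cases "y < k")
          case True
          then show ?thesis using xy by (intro bexI[of _ y]) (auto simp: dt1 dt1s A_def)
        next
          case yk: False
          have "x - k < 2 ^ k" "y - k < 2 ^ k" "x - k \<noteq> y - k"
            using xy xk yk unfolding V_def n_def by auto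
          then obtain a where a: "a < k" "bit (x - k) a \<noteq> bit (y - k) a"
            using bits_differ by blast
          have "D a x \<noteq> D a y" using a xy xk yk unfolding D_def V_def n_def by auto
          then show ?thesis using a xk yk by (intro bexI[of _ a]) (auto simp: dt1 dt1s A_def)
        qed
      qed
    qed
    moreover have "card A = k" unfolding A_def by simp
    ultimately have "k \<in> {card A | A. adjacency_resolving V D A}" by force
    then show ?thesis unfolding adim_def by (rule wellorder_Inf_le1)
  qed
  show ?thesis
    using sg ori adim_ge_bdim[OF fin, of E] adim_ge_bdim[OF fin, of D] bE aD
    unfolding n_def by blast
qed

end
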